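(* Let $\Phi\in\mathbb{R}^{n_{\mathscr D}\times n_g}$ and $y\in\mathbb{R}^{n_{\mathscr D}}$ with $\Phi^{\mathsf T}y\neq 0$, let $K\in\mathbb{R}^{n_g\times n_g}$ be symmetric positive definite, let $\lambda>0$, and let $g^{\mathrm{Reg}}=(\Phi^{\mathsf T}\Phi+\lambda K^{-1})^{-1}\Phi^{\mathsf T}y$. Then $g^{\mathrm{Reg}}\neq 0$, $\Phi g^{\mathrm{Reg}}-y\neq 0$, and with $$\rho := \lambda\,\frac{\big((g^{\mathrm{Reg}})^{\mathsf T}K^{-1}g^{\mathrm{Reg}}\big)^{1/2}}{\|\Phi g^{\mathrm{Reg}}-y\|}>0,$$ the vector $g^{\mathrm{Reg}}$ is a minimizer of $$\min_{g\in\mathbb{R}^{n_g}}\ \max_{\substack{\Delta\in\mathbb{R}^{n_{\mathscr D}\times n_g}\\ \|\Delta\|_K\le\rho}} \|(\Phi+\Delta)g-y\|.$$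
   Context: $\|\cdot\|$ denotes the Euclidean norm. For a symmetric positive definite $K\in\mathbb{R}^{n_g\times n_g}$ and a matrix $\Delta\in\mathbb{R}^{n_{\mathscr D}\times n_g}$, $\|\Delta\|_K := \big(\mathrm{tr}(\Delta K\Delta^{\mathsf T})\big)^{1/2}$. *)

theory Defs
  imports "HOL-Analysis.Analysis"
begin

definition sym_pos_def_mat :: "real^'n^'n \<Rightarrow> bool" where
  "sym_pos_def_mat K \<longleftrightarrow> transpose K = K \<and> (\<forall>x. x \<noteq> 0 \<longrightarrow> x \<bullet> (K *v x) > 0)"

definition K_norm :: "real^'n^'n \<Rightarrow> real^'n^'m \<Rightarrow> real" where
  "K_norm K D = sqrt (trace (D ** K ** transpose D))"

definition robust_obj :: "real^'n^'n \<Rightarrow> real \<Rightarrow> real^'n^'m \<Rightarrow> real^'m \<Rightarrow> real^'n \<Rightarrow> real" where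
  "robust_obj K \<rho> Phi y g = (SUP D \<in> {D. K_norm K D \<le> \<rho>}. norm ((Phi + D) *v g - y))"

definition g_reg :: "real^'n^'n \<Rightarrow> real \<Rightarrow> real^'n^'m \<Rightarrow> real^'m \<Rightarrow> real^'n" where
  "g_reg K lam Phi y = matrix_inv (transpose Phi ** Phi + lam *\<^sub>R matrix_inv K) *v (transpose Phi *v y)"

end

theory Submission imports Defs begin

lemma inv_props:
  fixes A :: "real^'n^'n"
  assumes "\<And>x. A *v x = 0 \<Longrightarrow> x = 0"
  shows "A *v (matrix_inv A *v z) = z" "matrix_inv A *v (A *v z) = z"
proof -
  have "invertible A" using assms matrix_left_invertible_ker invertible_left_inverse by blast
  then have "\<exists>A'. A ** A' = mat 1 \<and> A' ** A = mat 1" by (simp add: invertible_def)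
  then have h: "A ** matrix_inv A = mat 1 \<and> matrix_inv A ** A = mat 1"
    unfolding matrix_inv_def by (rule someI_ex)
  show "A *v (matrix_inv A *v z) = z" "matrix_inv A *v (A *v z) = z"
    using h by (simp_all add: matrix_vector_mul_assoc)
qed

lemma sym_dot:
  fixes K :: "real^'n^'n"
  assumes "transpose K = K"
  shows "x \<bullet> (K *v w) = w \<bullet> (K *v x)"
proof -
  have "x \<bullet> (K *v w) = (x v* K) \<bullet> w" by (simp add: dot_lmul_matrix)
  also have "x v* K = transpose K *v x" by simp
  finally show ?thesis using assms by (simp add: inner_commute)
qed

lemma cs_form:
  fixes K :: "real^'n^'n"
  assumes "sym_pos_def_mat K"
  shows "(x \<bullet> (K *v w))^2 \<le> (x \<bullet> (K *v x)) * (w \<bullet> (K *v w))"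
proof (cases "w = 0")
  case True then show ?thesis using assms by (simp add: sym_pos_def_mat_def)
next
  case False
  have s: "transpose K = K" and p: "\<And>x. x \<noteq> 0 \<Longrightarrow> x \<bullet> (K *v x) > 0"
    using assms by (auto simp: sym_pos_def_mat_def)
  have pos: "\<And>x. x \<bullet> (K *v x) \<ge> 0" using p by (metis less_le_not_le matrix_vector_mult_0_right inner_zero_left order_refl)
  define bw where "bw = w \<bullet> (K *v w)"
  define b where "b = x \<bullet> (K *v w)"
  define t where "t = b / bw"
  have bw: "bw > 0" using p False by (simp add: bw_def)
  have sw: "w \<bullet> (K *v x) = b" using sym_dot[OF s] b_def by metis
  have "0 \<le> (x - t *\<^sub>R w) \<bullet> (K *v (x - t *\<^sub>R w))" by (rule pos)
  also have "\<dots> = x \<bullet> (K *v x) - 2 * t * b + t^2 * bw"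
    by (simp add: matrix_vector_mult_diff_distrib matrix_vector_mult_scaleR inner_diff_left inner_diff_right sw b_def bw_def power2_eq_square algebra_simps)
  also have "\<dots> = x \<bullet> (K *v x) - b^2 / bw"
    using bw by (simp add: t_def power2_eq_square field_simps)
  finally have "b^2 / bw \<le> x \<bullet> (K *v x)" by simp
  then have "b^2 \<le> x \<bullet> (K *v x) * bw" using bw by (simp add: field_simps)
  then show ?thesis by (simp add: b_def bw_def)
qed

lemma trace_rows:
  fixes K :: "real^'n^'n" and D :: "real^'n^'m"
  shows "trace (D ** K ** transpose D) = (\<Sum>i\<in>UNIV. (D$i) \<bullet> (K *v (D$i)))"
proof -
  have "(D ** K ** transpose D)$i$i = (D$i) \<bullet> (K *v (D$i))" for i
  proof -
    have "(D ** K ** transpose D)$i$i = (\<Sum>k\<in>UNIV. (\<Sum>l\<in>UNIV. D$i$l * K$l$k) * D$i$k)"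
      by (simp add: matrix_matrix_mult_def transpose_def)
    also have "\<dots> = (\<Sum>k\<in>UNIV. \<Sum>l\<in>UNIV. D$i$l * (K$l$k * D$i$k))"
      by (simp add: sum_distrib_right mult.assoc)
    also have "\<dots> = (\<Sum>l\<in>UNIV. \<Sum>k\<in>UNIV. D$i$l * (K$l$k * D$i$k))"
      by (rule sum.swap)
    also have "\<dots> = (D$i) \<bullet> (K *v (D$i))"
      by (simp add: inner_vec_def matrix_vector_mult_def sum_distrib_left)
    finally show ?thesis .
  qed
  then show ?thesis by (simp add: trace_def)
qed


lemma K_inv:
  fixes K :: "real^'n^'n"
  assumes "sym_pos_def_mat K"
  shows "K *v (matrix_inv K *v z) = z" "matrix_inv K *v (K *v z) = z"
proof -
  have "\<And>x. K *v x = 0 \<Longrightarrow> x = 0" using assms unfolding sym_pos_def_mat_def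
    by (metis inner_zero_right less_irrefl)
  then show "K *v (matrix_inv K *v z) = z" "matrix_inv K *v (K *v z) = z" using inv_props by blast+
qed

lemma Kinv_form:
  fixes K :: "real^'n^'n"
  assumes "sym_pos_def_mat K"
  shows "v \<bullet> (matrix_inv K *v v) = (matrix_inv K *v v) \<bullet> (K *v (matrix_inv K *v v))"
  using K_inv[OF assms] by (simp add: inner_commute)

lemma Kinv_nonneg:
  fixes K :: "real^'n^'n"
  assumes "sym_pos_def_mat K"
  shows "v \<bullet> (matrix_inv K *v v) \<ge> 0"
proof -
  have "(matrix_inv K *v v) \<bullet> (K *v (matrix_inv K *v v)) \<ge> 0"
    using assms unfolding sym_pos_def_mat_def
    by (metis inner_zero_left less_le order_refl)
  then show ?thesis using Kinv_form[OF assms] by simp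
qed

lemma Kinv_pos:
  fixes K :: "real^'n^'n"
  assumes "sym_pos_def_mat K" "v \<noteq> 0"
  shows "v \<bullet> (matrix_inv K *v v) > 0"
proof -
  have "matrix_inv K *v v \<noteq> 0" using K_inv(1)[OF assms(1), of v] assms(2) by auto
  then have "(matrix_inv K *v v) \<bullet> (K *v (matrix_inv K *v v)) > 0"
    using assms unfolding sym_pos_def_mat_def by blast
  then show ?thesis using Kinv_form[OF assms(1)] by simp
qed

lemma Kinv_sym:
  fixes K :: "real^'n^'n"
  assumes "sym_pos_def_mat K"
  shows "x \<bullet> (matrix_inv K *v v) = (matrix_inv K *v x) \<bullet> v"
proof -
  have s: "transpose K = K" using assms by (simp add: sym_pos_def_mat_def)
  have "x \<bullet> (matrix_inv K *v v) = (K *v (matrix_inv K *v x)) \<bullet> (matrix_inv K *v v)"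
    using K_inv[OF assms] by simp
  also have "\<dots> = (matrix_inv K *v x) \<bullet> (K *v (matrix_inv K *v v))"
    using sym_dot[OF s] by (metis inner_commute)
  also have "\<dots> = (matrix_inv K *v x) \<bullet> v" using K_inv[OF assms] by simp
  finally show ?thesis .
qed

lemma norm_sq_sum: "(norm (x::real^'m))^2 = (\<Sum>i\<in>UNIV. (x$i)^2)"
  unfolding power2_norm_eq_inner inner_vec_def by (simp add: power2_eq_square)

lemma trace_nonneg:
  fixes K :: "real^'n^'n" and D :: "real^'n^'m"
  assumes "sym_pos_def_mat K"
  shows "trace (D ** K ** transpose D) \<ge> 0"
proof -
  have "\<And>x. x \<bullet> (K *v x) \<ge> 0"
    using assms unfolding sym_pos_def_mat_def by (metis inner_zero_left less_le order_refl)
  then show ?thesis by (simp add: trace_rows sum_nonneg)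
qed

lemma norm_Dv:
  fixes K :: "real^'n^'n" and D :: "real^'n^'m"
  assumes "sym_pos_def_mat K"
  shows "(norm (D *v v))^2 \<le> trace (D ** K ** transpose D) * (v \<bullet> (matrix_inv K *v v))"
proof -
  define w where "w = matrix_inv K *v v"
  have v: "v = K *v w" using K_inv[OF assms] w_def by simp
  have row: "(D *v v)$i = (D$i) \<bullet> (K *v w)" for i
    unfolding v[symmetric] by (simp add: matrix_vector_mult_def inner_vec_def)
  have "(norm (D *v v))^2 = (\<Sum>i\<in>UNIV. ((D$i) \<bullet> (K *v w))^2)"
    by (simp add: norm_sq_sum row)
  also have "\<dots> \<le> (\<Sum>i\<in>UNIV. ((D$i) \<bullet> (K *v (D$i))) * (w \<bullet> (K *v w)))"
    by (rule sum_mono) (rule cs_form[OF assms])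
  also have "\<dots> = trace (D ** K ** transpose D) * (v \<bullet> (matrix_inv K *v v))"
    using Kinv_form[OF assms, of v] by (simp add: trace_rows sum_distrib_right w_def)
  finally show ?thesis .
qed

lemma norm_Dv2:
  fixes K :: "real^'n^'n" and D :: "real^'n^'m"
  assumes "sym_pos_def_mat K" "K_norm K D \<le> \<rho>"
  shows "norm (D *v v) \<le> \<rho> * sqrt (v \<bullet> (matrix_inv K *v v))"
proof -
  have t0: "trace (D ** K ** transpose D) \<ge> 0" by (rule trace_nonneg[OF assms(1)])
  have "norm (D *v v) = sqrt ((norm (D *v v))^2)" by simp
  also have "\<dots> \<le> sqrt (trace (D ** K ** transpose D) * (v \<bullet> (matrix_inv K *v v)))"
    using norm_Dv[OF assms(1)] real_sqrt_le_mono by blast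
  also have "\<dots> = K_norm K D * sqrt (v \<bullet> (matrix_inv K *v v))"
    by (simp add: K_norm_def real_sqrt_mult)
  also have "\<dots> \<le> \<rho> * sqrt (v \<bullet> (matrix_inv K *v v))"
    using assms(2) Kinv_nonneg[OF assms(1), of v] by (simp add: mult_right_mono)
  finally show ?thesis .
qed

lemma robust_upper:
  fixes K :: "real^'n^'n" and Phi :: "real^'n^'m"
  assumes "sym_pos_def_mat K" "K_norm K D \<le> \<rho>"
  shows "norm ((Phi + D) *v g - y) \<le> norm (Phi *v g - y) + \<rho> * sqrt (g \<bullet> (matrix_inv K *v g))"
proof -
  have "(Phi + D) *v g - y = (Phi *v g - y) + D *v g" by (simp add: matrix_vector_mult_add_rdistrib)
  then have "norm ((Phi + D) *v g - y) \<le> norm (Phi *v g - y) + norm (D *v g)"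
    by (metis norm_triangle_ineq)
  then show ?thesis using norm_Dv2[OF assms, of g] by linarith
qed


theorem mainTheorem3:
  fixes Phi :: "real^'n^'m" and y :: "real^'m" and K :: "real^'n^'n" and lam :: real
  assumes "transpose Phi *v y \<noteq> 0"
    and "sym_pos_def_mat K"
    and "lam > 0"
  shows "g_reg K lam Phi y \<noteq> 0
    \<and> Phi *v g_reg K lam Phi y - y \<noteq> 0
    \<and> (let g = g_reg K lam Phi y;
           \<rho> = lam * sqrt (g \<bullet> (matrix_inv K *v g)) / norm (Phi *v g - y)
       in \<rho> > 0 \<and> (\<forall>g'. robust_obj K \<rho> Phi y g \<le> robust_obj K \<rho> Phi y g'))"
proof -
  note Kp = assms(2)
  define Ki where "Ki = matrix_inv K"
  define A where "A = transpose Phi ** Phi + lam *\<^sub>R Ki"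
  define b where "b = transpose Phi *v y"
  define g where "g = g_reg K lam Phi y"
  have g_def': "g = matrix_inv A *v b" by (simp add: g_def g_reg_def A_def Ki_def b_def)
  have Av: "A *v x = transpose Phi *v (Phi *v x) + lam *\<^sub>R (Ki *v x)" for x
    by (simp add: A_def matrix_vector_mult_add_rdistrib matrix_vector_mul_assoc scaleR_matrix_vector_assoc)
  have tr: "(transpose Phi *v z) \<bullet> x = z \<bullet> (Phi *v x)" for z x
    by (simp add: dot_lmul_matrix)
  have xAx: "x \<bullet> (A *v x) = (norm (Phi *v x))^2 + lam * (x \<bullet> (Ki *v x))" for x
    using tr[of "Phi *v x" x] by (simp add: Av inner_add_right inner_commute power2_norm_eq_inner)
  have Ainj: "x = 0" if "A *v x = 0" for x
  proof (rule ccontr)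
    assume "x \<noteq> 0"
    then have "x \<bullet> (Ki *v x) > 0" using Kinv_pos[OF Kp] Ki_def by blast
    then have "x \<bullet> (A *v x) > 0" using xAx[of x] assms(3)
      by (metis add_nonneg_pos mult_pos_pos zero_le_power2)
    then show False using that by simp
  qed
  have Ag: "A *v g = b" using inv_props(1)[of A b, OF Ainj] g_def' by simp
  have g0: "g \<noteq> 0" using Ag assms(1) b_def by auto
  define r where "r = Phi *v g - y"
  have PTr: "transpose Phi *v r = - (lam *\<^sub>R (Ki *v g))"
  proof -
    have "transpose Phi *v r = transpose Phi *v (Phi *v g) - b"
      by (simp add: r_def b_def matrix_vector_mult_diff_distrib)
    also have "\<dots> = - (lam *\<^sub>R (Ki *v g))" using Av[of g] Ag by (simp add: algebra_simps)
    finally show ?thesis .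
  qed
  have r0: "r \<noteq> 0"
  proof
    assume "r = 0"
    then have "lam *\<^sub>R (Ki *v g) = 0" using PTr by simp
    then have "Ki *v g = 0" using assms(3) by simp
    then have "g = 0" using K_inv(1)[OF Kp, of g] Ki_def by simp
    then show False using g0 by simp
  qed
  define q where "q = g \<bullet> (Ki *v g)"
  have qpos: "q > 0" using Kinv_pos[OF Kp g0] by (simp add: q_def Ki_def)
  define sq where "sq = sqrt q"
  have sqpos: "sq > 0" using qpos by (simp add: sq_def)
  have qsq: "q = sq^2" using qpos by (simp add: sq_def)
  define nr where "nr = norm r"
  have nrpos: "nr > 0" using r0 by (simp add: nr_def)
  define \<rho> where "\<rho> = lam * sq / nr"
  have rhopos: "\<rho> > 0" using assms(3) sqpos nrpos by (simp add: \<rho>_def)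
  have rho_eq: "\<rho> = lam * sqrt (g \<bullet> (matrix_inv K *v g)) / norm (Phi *v g - y)"
    by (simp add: \<rho>_def sq_def q_def Ki_def nr_def r_def)
  have K0: "K_norm K (0::real^'n^'m) = 0"
    by (simp add: K_norm_def trace_def)
  have up: "robust_obj K \<rho> Phi y g \<le> nr + \<rho> * sq"
    unfolding robust_obj_def
  proof (rule cSUP_least)
    show "{D::real^'n^'m. K_norm K D \<le> \<rho>} \<noteq> {}" proof -
      have "(0::real^'n^'m) \<in> {D. K_norm K D \<le> \<rho>}" using K0 rhopos by simp
      then show ?thesis by blast
    qed
  next
    fix D :: "real^'n^'m" assume "D \<in> {D. K_norm K D \<le> \<rho>}"
    then show "norm ((Phi + D) *v g - y) \<le> nr + \<rho> * sq"
      using robust_upper[OF Kp, of D \<rho> Phi g y] by (simp add: nr_def r_def sq_def q_def Ki_def)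
  qed
  \<comment> \<open>worst-case perturbation\<close>
  define w where "w = Ki *v g"
  define a where "a = lam / nr^2"
  define Dst :: "real^'n^'m" where "Dst = (\<chi> i j. (a * r$i) * w$j)"
  have Dst_v: "Dst *v x = (a * (w \<bullet> x)) *\<^sub>R r" for x
    by (simp add: Dst_def vec_eq_iff matrix_vector_mult_def inner_vec_def sum_distrib_left algebra_simps)
  have Dst_row: "Dst$i = (a * r$i) *\<^sub>R w" for i
    by (simp add: Dst_def vec_eq_iff)
  have wKw: "w \<bullet> (K *v w) = q"
    using Kinv_form[OF Kp, of g] by (simp add: w_def Ki_def q_def)
  have "trace (Dst ** K ** transpose Dst) = (\<Sum>i\<in>UNIV. (a * r$i)^2 * q)"
    by (simp add: trace_rows Dst_row matrix_vector_mult_scaleR wKw power2_eq_square algebra_simps)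
  also have "\<dots> = a^2 * q * nr^2"
    by (simp add: nr_def norm_sq_sum sum_distrib_left sum_distrib_right power_mult_distrib algebra_simps)
  also have "\<dots> = \<rho>^2"
    using nrpos by (simp add: a_def qsq \<rho>_def power2_eq_square field_simps)
  finally have "K_norm K Dst = \<rho>" using rhopos by (simp add: K_norm_def)
  then have Dst_in: "Dst \<in> {D. K_norm K D \<le> \<rho>}" by simp
  define M where "M = Phi + Dst"
  have wg: "w \<bullet> g = q" by (simp add: w_def q_def inner_commute)
  have e: "M *v g - y = (1 + a * q) *\<^sub>R r"
    by (simp add: M_def matrix_vector_mult_add_rdistrib Dst_v wg r_def algebra_simps)
  have orth: "r \<bullet> (M *v d) = 0" for d
  proof -
    have "r \<bullet> (Phi *v d) = - lam * (w \<bullet> d)"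
      using tr[of r d] PTr by (simp add: w_def)
    moreover have "r \<bullet> (Dst *v d) = a * (w \<bullet> d) * nr^2"
      by (simp add: Dst_v nr_def power2_norm_eq_inner)
    moreover have "a * nr^2 = lam" using nrpos by (simp add: a_def)
    ultimately show ?thesis by (simp add: M_def matrix_vector_mult_add_rdistrib inner_add_right)
  qed
  have en: "norm (M *v g - y) = nr + \<rho> * sq"
  proof -
    have "a * q \<ge> 0" using qpos assms(3) by (simp add: a_def)
    then have "norm (M *v g - y) = (1 + a * q) * nr" by (simp add: e nr_def)
    also have "\<dots> = nr + \<rho> * sq" using nrpos
      by (simp add: a_def qsq \<rho>_def power2_eq_square field_simps)
    finally show ?thesis .
  qed
  have lower: "nr + \<rho> * sq \<le> robust_obj K \<rho> Phi y g'" for g'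
  proof -
    define d where "d = g' - g"
    have "M *v g' - y = (M *v g - y) + M *v d"
      by (simp add: d_def matrix_vector_mult_diff_distrib)
    then have "(norm (M *v g' - y))^2 = (norm (M *v g - y))^2 + (norm (M *v d))^2"
    proof -
      have o: "(M *v g - y) \<bullet> (M *v d) = 0" using orth[of d] by (simp add: e)
      show ?thesis unfolding \<open>M *v g' - y = (M *v g - y) + M *v d\<close> power2_norm_eq_inner
        using o by (simp add: inner_add_left inner_add_right inner_commute)
    qed
    then have "(norm (M *v g - y))^2 \<le> (norm (M *v g' - y))^2" by simp
    then have "norm (M *v g - y) \<le> norm (M *v g' - y)"
      using power2_le_imp_le norm_ge_zero by blast
    also have "\<dots> \<le> robust_obj K \<rho> Phi y g'"
      unfolding robust_obj_def M_def
    proof (rule cSUP_upper[OF Dst_in])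
      show "bdd_above ((\<lambda>D. norm ((Phi + D) *v g' - y)) ` {D. K_norm K D \<le> \<rho>})"
        using robust_upper[OF Kp] by (intro bdd_aboveI2) auto
    qed
    finally show ?thesis using en by simp
  qed
  show ?thesis
    unfolding g_def[symmetric] Let_def rho_eq[symmetric]
    using g0 r0[unfolded r_def] rhopos up lower by (meson order_trans)
qed

end
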